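(* Let $\mathcal H$ be a separable Hilbert space with inner product $\langle\cdot,\cdot\rangle$ and norm $\|\cdot\|$. Let $(X_i,Y_i)$, $i=1,\dots,n$, be i.i.d. $\mathcal H\times\mathbb R$-valued random variables satisfying $Y_i=\alpha+\langle X_i,\beta\rangle+\varepsilon_i$, where $\varepsilon_1,\dots,\varepsilon_n$ are independent of $X_1,\dots,X_n$, i.i.d., centred, with $E[\varepsilon_1^2]<\infty$ and with cdf twice differentiable with bounded density and bounded derivative of the density. Assume $E\|X_1\|^4<\infty$, $\hat\alpha=\overline Y_n-\langle\overline X_n,\hat\beta\rangle$ and $\|\hat\beta-\beta\|=o_{\mathbb P}(n^{-1/4})$. Let $W$ be a non-negative symmetric weight function with $\int t^4W(t)dt<\infty$. Then, with $X\sim X_1$, $$n\int\Big(\frac tn\sum_{j=1}^n\cos(t\varepsilon_j)\langle X_j-E[X],\hat\beta-\beta\rangle\Big)^2W(t)dt=o_{\mathbb P}(1).$$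
   Context: $\overline Y_n=\frac1n\sum Y_i$, $\overline X_n=\frac1n\sum X_i$; $\hat\alpha,\hat\beta$ are estimators of $\alpha\in\mathbb R,\beta\in\mathcal H$ computed from the sample. *)

theory Defs
  imports "HOL-Probability.Probability"
begin

definition o_P :: "'a measure \<Rightarrow> (nat \<Rightarrow> 'a \<Rightarrow> real) \<Rightarrow> (nat \<Rightarrow> real) \<Rightarrow> bool" where
  "o_P M Z r \<longleftrightarrow>
     (\<forall>e>0. (\<lambda>n. measure M {\<omega> \<in> space M. \<bar>Z n \<omega>\<bar> > e * r n}) \<longlonglongrightarrow> 0)"

definition cdf_of :: "'a measure \<Rightarrow> ('a \<Rightarrow> real) \<Rightarrow> real \<Rightarrow> real" where
  "cdf_of M Z t = measure M {\<omega> \<in> space M. Z \<omega> \<le> t}"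

end

theory Submission
  imports Defs
begin


definition Kf :: "(real \<Rightarrow> real) \<Rightarrow> real \<Rightarrow> real \<Rightarrow> real" where
  "Kf W a b = (\<integral>t. t^2 * (cos (t*a) * cos (t*b)) * W t \<partial>lborel)"

lemma t2W_int:
  fixes W :: "real \<Rightarrow> real"
  assumes W_meas: "W \<in> borel_measurable borel" and W_nonneg: "\<And>t. W t \<ge> 0"
    and W_int: "integrable lborel W" and W_4th: "integrable lborel (\<lambda>t. t ^ 4 * W t)"
  shows "integrable lborel (\<lambda>t. t^2 * W t)"
proof (rule Bochner_Integration.integrable_bound[where f="\<lambda>t. W t + t^4 * W t"])
  show "integrable lborel (\<lambda>t. W t + t^4 * W t)" using W_int W_4th by auto
  show "(\<lambda>t. t^2 * W t) \<in> borel_measurable lborel" using W_meas by measurable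
  show "AE x in lborel. norm (x^2 * W x) \<le> norm (W x + x^4 * W x)"
  proof (intro AE_I2)
    fix x :: real
    have e: "(x^2 - 1/2)^2 = x^4 - x^2 + 1/4" by (simp add: power2_eq_square power4_eq_xxxx algebra_simps)
    have "0 \<le> (x^2 - 1/2)^2" by simp
    hence "x^2 \<le> 1 + x^4" unfolding e by linarith
    hence "x^2 * W x \<le> (1 + x^4) * W x" using W_nonneg by (intro mult_right_mono) auto
    thus "norm (x^2 * W x) \<le> norm (W x + x^4 * W x)" using W_nonneg[of x]
      by (simp add: algebra_simps)
  qed
qed

lemma g_int:
  fixes W :: "real \<Rightarrow> real"
  assumes W_meas: "W \<in> borel_measurable borel" and W_nonneg: "\<And>t. W t \<ge> 0"
    and I2: "integrable lborel (\<lambda>t. t^2 * W t)"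
  shows "integrable lborel (\<lambda>t. t^2 * (cos (t*a) * cos (t*b)) * W t)"
proof (rule Bochner_Integration.integrable_bound[OF I2])
  show "(\<lambda>t. t^2 * (cos (t*a) * cos (t*b)) * W t) \<in> borel_measurable lborel" using W_meas by measurable
  show "AE x in lborel. norm (x^2 * (cos (x*a) * cos (x*b)) * W x) \<le> norm (x^2 * W x)"
  proof (intro AE_I2)
    fix x :: real
    have "\<bar>cos (x*a) * cos (x*b)\<bar> \<le> 1"
      by (simp add: abs_mult mult_le_one)
    hence h: "(x^2 * W x) * \<bar>cos (x*a) * cos (x*b)\<bar> \<le> (x^2 * W x) * 1" using W_nonneg[of x] by (intro mult_left_mono) auto
    have "norm (x^2 * (cos (x*a) * cos (x*b)) * W x) = (x^2 * W x) * \<bar>cos (x*a) * cos (x*b)\<bar>"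
      using W_nonneg[of x] by (simp add: abs_mult)
    thus "norm (x^2 * (cos (x*a) * cos (x*b)) * W x) \<le> norm (x^2 * W x)" using h W_nonneg[of x] by simp
  qed
qed

lemma pointwise:
  fixes z :: "nat \<Rightarrow> 'h::real_inner" and e :: "nat \<Rightarrow> real" and d :: 'h and n :: nat
    and W :: "real \<Rightarrow> real"
  assumes n: "n \<ge> 1" and W_meas: "W \<in> borel_measurable borel" and W_nonneg: "\<And>t. W t \<ge> 0"
    and I2: "integrable lborel (\<lambda>t. t^2 * W t)"
  shows "real n * (\<integral>t. ((t / real n) * (\<Sum>j<n. cos (t * e j) * inner (z j) d))\<^sup>2 * W t \<partial>lborel)
           \<le> (norm d)\<^sup>2 * ((\<Sum>i<n. \<Sum>j<n. inner (z i) (z j) * Kf W (e i) (e j)) / real n)"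
    and "0 \<le> (\<Sum>i<n. \<Sum>j<n. inner (z i) (z j) * Kf W (e i) (e j))"
proof -
  define V where "V t = (\<Sum>j<n. cos (t * e j) *\<^sub>R z j)" for t
  have s: "(\<Sum>j<n. cos (t * e j) * inner (z j) d) = inner (V t) d" for t
    by (simp add: V_def inner_sum_left)
  have nv: "(norm (V t))\<^sup>2 = (\<Sum>i<n. \<Sum>j<n. inner (z i) (z j) * (cos (t * e i) * cos (t * e j)))" for t
  proof -
    have "(norm (V t))\<^sup>2 = (\<Sum>i<n. \<Sum>j<n. cos (t * e i) * (cos (t * e j) * inner (z i) (z j)))"
      apply (simp add: V_def power2_norm_eq_inner inner_sum_left inner_sum_right sum_distrib_left)
      apply (intro sum.cong refl)
      apply (simp add: inner_commute)
      done
    thus ?thesis by (simp add: mult_ac)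
  qed
  define R where "R t = t^2 * (norm (V t))\<^sup>2 * W t" for t
  have R_eq: "R t = (\<Sum>i<n. \<Sum>j<n. inner (z i) (z j) * (t^2 * (cos (t * e i) * cos (t * e j)) * W t))" for t
    by (simp add: R_def nv sum_distrib_left sum_distrib_right algebra_simps)
  have gi: "integrable lborel (\<lambda>t. t^2 * (cos (t*a) * cos (t*b)) * W t)" for a b
    using g_int[OF W_meas W_nonneg I2] .
  have R_int: "integrable lborel R"
    unfolding R_eq[abs_def] by (intro Bochner_Integration.integrable_sum integrable_mult_right gi)
  have int_R: "integral\<^sup>L lborel R = (\<Sum>i<n. \<Sum>j<n. inner (z i) (z j) * Kf W (e i) (e j))"
    unfolding R_eq[abs_def] Kf_def
    by (subst Bochner_Integration.integral_sum, (intro Bochner_Integration.integrable_sum integrable_mult_right gi))+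
       (intro sum.cong refl, simp)
  have R_nonneg: "0 \<le> R t" for t using W_nonneg[of t] by (simp add: R_def)
  show "0 \<le> (\<Sum>i<n. \<Sum>j<n. inner (z i) (z j) * Kf W (e i) (e j))"
    unfolding int_R[symmetric] using R_nonneg by (intro integral_nonneg_AE) auto
  define L where "L t = ((t / real n) * (\<Sum>j<n. cos (t * e j) * inner (z j) d))\<^sup>2 * W t" for t
  have L_le: "L t \<le> ((norm d)\<^sup>2 / (real n)\<^sup>2) * R t" for t
  proof -
    have cs: "(inner (V t) d)\<^sup>2 \<le> (norm (V t))\<^sup>2 * (norm d)\<^sup>2"
    proof -
      have "\<bar>inner (V t) d\<bar> \<le> norm (V t) * norm d" by (rule Cauchy_Schwarz_ineq2)
      hence "\<bar>inner (V t) d\<bar>\<^sup>2 \<le> (norm (V t) * norm d)\<^sup>2" by (intro power_mono) auto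
      thus ?thesis by (simp add: power_mult_distrib)
    qed
    have "L t = (t^2 / (real n)^2) * W t * (inner (V t) d)\<^sup>2"
      by (simp add: L_def s power_mult_distrib power_divide)
    also have "\<dots> \<le> (t^2 / (real n)^2) * W t * ((norm (V t))\<^sup>2 * (norm d)\<^sup>2)"
      using W_nonneg[of t] cs by (intro mult_left_mono) auto
    also have "\<dots> = ((norm d)\<^sup>2 / (real n)\<^sup>2) * R t" by (simp add: R_def)
    finally show ?thesis .
  qed
  have L_nonneg: "0 \<le> L t" for t using W_nonneg[of t] by (simp add: L_def)
  have L_meas: "L \<in> borel_measurable lborel" unfolding L_def using W_meas by measurable
  have RR_int: "integrable lborel (\<lambda>t. ((norm d)\<^sup>2 / (real n)\<^sup>2) * R t)" using R_int by auto
  have L_int: "integrable lborel L"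
    by (rule Bochner_Integration.integrable_bound[OF RR_int L_meas])
       (use L_le L_nonneg R_nonneg in auto)
  have "integral\<^sup>L lborel L \<le> integral\<^sup>L lborel (\<lambda>t. ((norm d)\<^sup>2 / (real n)\<^sup>2) * R t)"
    by (rule integral_mono[OF L_int RR_int L_le])
  also have "\<dots> = ((norm d)\<^sup>2 / (real n)\<^sup>2) * integral\<^sup>L lborel R" by simp
  finally have "real n * integral\<^sup>L lborel L \<le> real n * (((norm d)\<^sup>2 / (real n)\<^sup>2) * integral\<^sup>L lborel R)"
    using n by (intro mult_left_mono) auto
  also have "\<dots> = (norm d)\<^sup>2 * (integral\<^sup>L lborel R / real n)"
    using n by (simp add: power2_eq_square field_simps)
  finally show "real n * (\<integral>t. ((t / real n) * (\<Sum>j<n. cos (t * e j) * inner (z j) d))\<^sup>2 * W t \<partial>lborel)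
           \<le> (norm d)\<^sup>2 * ((\<Sum>i<n. \<Sum>j<n. inner (z i) (z j) * Kf W (e i) (e j)) / real n)"
    unfolding L_def[abs_def] int_R .
qed



lemma (in prob_space) indep_inner:
  fixes U V :: "'a \<Rightarrow> 'h::{real_inner, banach, second_countable_topology}"
  assumes ind: "indep_var borel U borel V" and iU: "integrable M U" and iV: "integrable M V"
  shows "integrable M (\<lambda>\<omega>. inner (U \<omega>) (V \<omega>))"
    and "(\<integral>\<omega>. inner (U \<omega>) (V \<omega>) \<partial>M) = inner (\<integral>\<omega>. U \<omega> \<partial>M) (\<integral>\<omega>. V \<omega> \<partial>M)"
proof -
  have mU[measurable]: "U \<in> borel_measurable M" using iU by auto
  have mV[measurable]: "V \<in> borel_measurable M" using iV by auto
  have indn: "indep_var borel (norm \<circ> U) borel (norm \<circ> V)"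
    by (rule indep_var_compose[OF ind]) auto
  have "integrable M (\<lambda>\<omega>. (norm \<circ> U) \<omega> * (norm \<circ> V) \<omega>)"
    by (rule indep_var_integrable[OF indn]) (use iU iV in \<open>auto simp: o_def\<close>)
  then show int: "integrable M (\<lambda>\<omega>. inner (U \<omega>) (V \<omega>))"
    by (rule Bochner_Integration.integrable_bound) (auto intro!: AE_I2 simp: Cauchy_Schwarz_ineq2)
  let ?PU = "distr M borel U" and ?PV = "distr M borel V"
  interpret pU: prob_space ?PU by (rule prob_space_distr) simp
  interpret pV: prob_space ?PV by (rule prob_space_distr) simp
  interpret P: pair_sigma_finite ?PU ?PV ..
  have dist: "?PU \<Otimes>\<^sub>M ?PV = distr M (borel \<Otimes>\<^sub>M borel) (\<lambda>x. (U x, V x))"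
    using ind by (simp add: indep_var_distribution_eq)
  have "(\<integral>\<omega>. inner (U \<omega>) (V \<omega>) \<partial>M) = (\<integral>p. inner (fst p) (snd p) \<partial>distr M (borel \<Otimes>\<^sub>M borel) (\<lambda>x. (U x, V x)))"
    by (subst integral_distr) auto
  also have "\<dots> = (\<integral>p. inner (fst p) (snd p) \<partial>(?PU \<Otimes>\<^sub>M ?PV))" by (simp add: dist)
  also have intP: "integrable (?PU \<Otimes>\<^sub>M ?PV) (\<lambda>p. inner (fst p) (snd p))"
    unfolding dist by (subst integrable_distr_eq) (use int in auto)
  have "(\<integral>p. inner (fst p) (snd p) \<partial>(?PU \<Otimes>\<^sub>M ?PV)) = (\<integral>u. (\<integral>v. inner u v \<partial>?PV) \<partial>?PU)"
    using P.integral_fst'[OF intP] by simp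
  also have "\<dots> = (\<integral>u. inner u (\<integral>v. v \<partial>?PV) \<partial>?PU)"
    using iV by (simp add: integrable_distr_eq)
  also have "\<dots> = inner (\<integral>u. u \<partial>?PU) (\<integral>v. v \<partial>?PV)"
    using iU by (simp add: integrable_distr_eq)
  also have "\<dots> = inner (\<integral>\<omega>. U \<omega> \<partial>M) (\<integral>\<omega>. V \<omega> \<partial>M)"
    by (simp add: integral_distr)
  finally show "(\<integral>\<omega>. inner (U \<omega>) (V \<omega>) \<partial>M) = inner (\<integral>\<omega>. U \<omega> \<partial>M) (\<integral>\<omega>. V \<omega> \<partial>M)" .
qed



lemma pair_meas:
  fixes f :: "'a \<Rightarrow> 'h::{second_countable_topology, real_normed_vector}" and g :: "'a \<Rightarrow> real"
  assumes [measurable]: "f \<in> borel_measurable M" "g \<in> borel_measurable M"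
  shows "(\<lambda>\<omega>. (f \<omega>, g \<omega>)) \<in> borel_measurable M"
  by measurable

lemma Kf_meas:
  fixes W :: "real \<Rightarrow> real"
  assumes W_meas[measurable]: "W \<in> borel_measurable borel"
    and [measurable]: "f \<in> borel_measurable N" "g \<in> borel_measurable N"
  shows "(\<lambda>x. Kf W (f x) (g x)) \<in> borel_measurable N"
  unfolding Kf_def
  by (rule lborel.borel_measurable_lebesgue_integral) measurable

lemma Kf_bound:
  fixes W :: "real \<Rightarrow> real"
  assumes W_meas: "W \<in> borel_measurable borel" and W_nonneg: "\<And>t. W t \<ge> 0"
    and I2: "integrable lborel (\<lambda>t. t^2 * W t)"
  shows "\<bar>Kf W a b\<bar> \<le> (\<integral>t. t^2 * W t \<partial>lborel)"
proof -
  have "\<bar>Kf W a b\<bar> \<le> (\<integral>t. \<bar>t^2 * (cos (t*a) * cos (t*b)) * W t\<bar> \<partial>lborel)"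
    unfolding Kf_def by (rule integral_abs_bound)
  also have "\<dots> \<le> (\<integral>t. t^2 * W t \<partial>lborel)"
  proof (rule integral_mono)
    show "integrable lborel (\<lambda>t. \<bar>t^2 * (cos (t*a) * cos (t*b)) * W t\<bar>)"
      using g_int[OF W_meas W_nonneg I2] by auto
    show "integrable lborel (\<lambda>t. t^2 * W t)" by (rule I2)
    fix x :: real
    have "\<bar>cos (x*a) * cos (x*b)\<bar> \<le> 1"
      by (simp add: abs_mult mult_le_one)
    hence h: "(x^2 * W x) * \<bar>cos (x*a) * cos (x*b)\<bar> \<le> (x^2 * W x) * 1" using W_nonneg[of x] by (intro mult_left_mono) auto
    have "\<bar>x^2 * (cos (x*a) * cos (x*b)) * W x\<bar> = (x^2 * W x) * \<bar>cos (x*a) * cos (x*b)\<bar>"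
      using W_nonneg[of x] by (simp add: abs_mult)
    thus "\<bar>x^2 * (cos (x*a) * cos (x*b)) * W x\<bar> \<le> x^2 * W x" using h by simp
  qed
  finally show ?thesis .
qed

lemma vimage_in:
  fixes Xa :: "'a \<Rightarrow> 'i \<Rightarrow> 'b::topological_space"
  assumes "\<And>\<omega>. \<omega> \<in> space M \<Longrightarrow> F \<omega> = \<phi> (Xa \<omega>)"
    and "\<phi> \<in> borel_measurable (PiM UNIV (\<lambda>_. borel))" and "S \<in> sets borel"
  shows "F -` S \<inter> space M \<in> sets (vimage_algebra (space M) Xa (PiM UNIV (\<lambda>_. borel)))"
proof -
  have "Xa \<in> space M \<rightarrow> space (PiM UNIV (\<lambda>_. (borel :: 'b measure)))" by (simp add: space_PiM)
  hence eq: "sets (vimage_algebra (space M) Xa (PiM UNIV (\<lambda>_. borel))) = {Xa -` A \<inter> space M | A. A \<in> sets (PiM UNIV (\<lambda>_. (borel :: 'b measure)))}"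
    by (rule sets_vimage_algebra2)
  have "F -` S \<inter> space M = Xa -` (\<phi> -` S \<inter> space (PiM UNIV (\<lambda>_. (borel :: 'b measure)))) \<inter> space M"
    using assms(1) by (auto simp: space_PiM)
  moreover have "\<phi> -` S \<inter> space (PiM UNIV (\<lambda>_. (borel :: 'b measure))) \<in> sets (PiM UNIV (\<lambda>_. borel))"
    using assms(2,3) by (rule measurable_sets)
  ultimately show ?thesis unfolding eq by blast
qed

lemma (in prob_space) indep_var_from_set:
  assumes ind: "indep_set A B" and sA: "sigma_algebra (space M) A" and sB: "sigma_algebra (space M) B"
    and F: "F \<in> borel_measurable M" and G: "G \<in> borel_measurable M"
    and FA: "\<And>S. S \<in> sets (borel :: 'b::topological_space measure) \<Longrightarrow> F -` S \<inter> space M \<in> A"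
    and GB: "\<And>S. S \<in> sets (borel :: 'b measure) \<Longrightarrow> G -` S \<inter> space M \<in> B"
  shows "indep_var (borel :: 'b measure) F (borel :: 'b measure) G"
proof -
  have subA: "sigma_sets (space M) {F -` S \<inter> space M | S. S \<in> sets (borel :: 'b measure)} \<subseteq> A"
    by (rule sigma_algebra.sigma_sets_subset[OF sA]) (use FA in auto)
  have subB: "sigma_sets (space M) {G -` S \<inter> space M | S. S \<in> sets (borel :: 'b measure)} \<subseteq> B"
    by (rule sigma_algebra.sigma_sets_subset[OF sB]) (use GB in auto)
  from ind have *: "A \<subseteq> events \<and> B \<subseteq> events \<and> (\<forall>a\<in>A. \<forall>b\<in>B. prob (a \<inter> b) = prob a * prob b)"
    by (simp add: indep_sets2_eq)
  show ?thesis unfolding indep_var_eq indep_sets2_eq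
    using F G subA subB * by blast
qed



lemma ident_transfer:
  fixes f :: "'b \<Rightarrow> 'c::{banach, second_countable_topology}"
  assumes d: "distr M N P1 = distr M N P0" and m1: "P1 \<in> measurable M N" and m0: "P0 \<in> measurable M N"
    and f: "f \<in> borel_measurable N"
  shows "(\<integral>\<omega>. f (P1 \<omega>) \<partial>M) = (\<integral>\<omega>. f (P0 \<omega>) \<partial>M)"
    and "integrable M (\<lambda>\<omega>. f (P1 \<omega>)) \<longleftrightarrow> integrable M (\<lambda>\<omega>. f (P0 \<omega>))"
proof -
  show "(\<integral>\<omega>. f (P1 \<omega>) \<partial>M) = (\<integral>\<omega>. f (P0 \<omega>) \<partial>M)"
    using integral_distr[OF m1 f] integral_distr[OF m0 f] d by simp
  show "integrable M (\<lambda>\<omega>. f (P1 \<omega>)) \<longleftrightarrow> integrable M (\<lambda>\<omega>. f (P0 \<omega>))"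
    using integrable_distr_eq[OF m1 f] integrable_distr_eq[OF m0 f] d by simp
qed

lemma aux_le4: "(a::real) \<ge> 0 \<Longrightarrow> a \<le> 2 + a^4"
proof -
  assume "a \<ge> 0"
  have e: "(a^2 - 1/2)^2 = a^4 - a^2 + 1/4" by (simp add: power2_eq_square power4_eq_xxxx algebra_simps)
  have "0 \<le> (a^2 - 1/2)^2" by simp
  hence 1: "a^2 \<le> 1 + a^4" unfolding e by linarith
  have e2: "(a - 1/2)^2 = a^2 - a + 1/4" by (simp add: power2_eq_square algebra_simps)
  have "0 \<le> (a - 1/2)^2" by simp
  hence "a \<le> 1 + a^2" unfolding e2 by linarith
  with 1 show ?thesis by linarith
qed

lemma aux_sq4: "(a::real)^2 \<le> 1 + a^4"
proof -
  have e: "(a^2 - 1/2)^2 = a^4 - a^2 + 1/4" by (simp add: power2_eq_square power4_eq_xxxx algebra_simps)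
  have "0 \<le> (a^2 - 1/2)^2" by simp
  thus ?thesis unfolding e by linarith
qed

lemma aux_diff_sq:
  fixes x m :: "'h::real_normed_vector"
  shows "(norm (x - m))^2 \<le> 2 + 2 * (norm x)^4 + 2 * (norm m)^2"
proof -
  have "norm (x - m) \<le> norm x + norm m" by (rule norm_triangle_ineq4)
  hence "(norm (x - m))^2 \<le> (norm x + norm m)^2" by (intro power_mono) auto
  also have "\<dots> \<le> 2 * (norm x)^2 + 2 * (norm m)^2"
    using sum_squares_ge_zero[of "norm x - norm m" 0] by (simp add: power2_eq_square algebra_simps)
  also have "\<dots> \<le> 2 + 2 * (norm x)^4 + 2 * (norm m)^2" using aux_sq4[of "norm x"] by linarith
  finally show ?thesis .
qed

theorem lemmaA3:
  fixes M :: "'a measure"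
    and X :: "nat \<Rightarrow> 'a \<Rightarrow> 'h::{real_inner, banach, second_countable_topology}"
    and Y eps :: "nat \<Rightarrow> 'a \<Rightarrow> real"
    and alpha :: real and beta :: 'h
    and alphahat :: "nat \<Rightarrow> 'a \<Rightarrow> real" and betahat :: "nat \<Rightarrow> 'a \<Rightarrow> 'h"
    and W :: "real \<Rightarrow> real"
  assumes P: "prob_space M"
    and X_meas: "\<And>i. X i \<in> borel_measurable M"
    and eps_meas: "\<And>i. eps i \<in> borel_measurable M"
    and model: "\<And>i \<omega>. \<omega> \<in> space M \<Longrightarrow> Y i \<omega> = alpha + inner (X i \<omega>) beta + eps i \<omega>"
    and XY_indep: "prob_space.indep_vars M (\<lambda>_. borel) (\<lambda>i \<omega>. (X i \<omega>, Y i \<omega>)) UNIV"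
    and XY_ident: "\<And>i. distr M borel (\<lambda>\<omega>. (X i \<omega>, Y i \<omega>)) = distr M borel (\<lambda>\<omega>. (X 0 \<omega>, Y 0 \<omega>))"
    and eps_indep: "prob_space.indep_vars M (\<lambda>_. borel) eps UNIV"
    and eps_ident: "\<And>i. distr M borel (eps i) = distr M borel (eps 0)"
    and eps_X_indep: "prob_space.indep_set M
              (sets (vimage_algebra (space M) (\<lambda>\<omega> i. X i \<omega>) (PiM UNIV (\<lambda>_. borel))))
              (sets (vimage_algebra (space M) (\<lambda>\<omega> i. eps i \<omega>) (PiM UNIV (\<lambda>_. borel))))"
    and eps_int: "integrable M (eps 0)"
    and eps_centred: "(\<integral>\<omega>. eps 0 \<omega> \<partial>M) = 0"
    and eps_sq: "integrable M (\<lambda>\<omega>. (eps 0 \<omega>)\<^sup>2)"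
    and eps_cdf: "\<exists>f f' B. (\<forall>t. (cdf_of M (eps 0) has_real_derivative f t) (at t))
                        \<and> (\<forall>t. (f has_real_derivative f' t) (at t))
                        \<and> (\<forall>t. \<bar>f t\<bar> \<le> B \<and> \<bar>f' t\<bar> \<le> B)"
    and X_4th: "integrable M (\<lambda>\<omega>. (norm (X 0 \<omega>)) ^ 4)"
    and betahat_sample: "\<And>n. \<exists>g. g \<in> borel_measurable (PiM {..<n} (\<lambda>_. borel)) \<and>
                           (\<forall>\<omega>\<in>space M. betahat n \<omega> = g (\<lambda>i\<in>{..<n}. (X i \<omega>, Y i \<omega>)))"
    and alphahat_def: "\<And>n \<omega>. n \<ge> 1 \<Longrightarrow> \<omega> \<in> space M \<Longrightarrow>
                alphahat n \<omega> = (\<Sum>i<n. Y i \<omega>) / real n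
                                 - inner ((1 / real n) *\<^sub>R (\<Sum>i<n. X i \<omega>)) (betahat n \<omega>)"
    and betahat_rate: "o_P M (\<lambda>n \<omega>. norm (betahat n \<omega> - beta)) (\<lambda>n. real n powr (-1/4))"
    and W_meas: "W \<in> borel_measurable borel"
    and W_nonneg: "\<And>t. W t \<ge> 0"
    and W_symm: "\<And>t. W (-t) = W t"
    and W_int: "integrable lborel W"
    and W_4th: "integrable lborel (\<lambda>t. t ^ 4 * W t)"
  shows "o_P M (\<lambda>n \<omega>. real n *
            (\<integral>t. ((t / real n) * (\<Sum>j<n. cos (t * eps j \<omega>) *
                     inner (X j \<omega> - (\<integral>\<omega>'. X 0 \<omega>' \<partial>M)) (betahat n \<omega> - beta)))\<^sup>2 * W t \<partial>lborel))
            (\<lambda>_. 1)"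
proof -
  interpret prob_space M by (rule P)
  note X_meas[measurable] eps_meas[measurable]
  have Y_meas[measurable]: "Y i \<in> borel_measurable M" for i
  proof -
    have "(\<lambda>\<omega>. alpha + inner (X i \<omega>) beta + eps i \<omega>) \<in> borel_measurable M" by measurable
    then show ?thesis
      by (subst measurable_cong[where g="\<lambda>\<omega>. alpha + inner (X i \<omega>) beta + eps i \<omega>"]) (auto simp: model)
  qed
  define P where "P i = (\<lambda>\<omega>. (X i \<omega>, Y i \<omega>))" for i
  have P_meas[measurable]: "P i \<in> borel_measurable M" for i
    unfolding P_def by (rule pair_meas) auto
  have Pid: "distr M borel (P i) = distr M borel (P 0)" for i
    unfolding P_def by (rule XY_ident)
  define m where "m = (\<integral>\<omega>. X 0 \<omega> \<partial>M)"
  define C2 where "C2 = (\<integral>t. t^2 * W t \<partial>lborel)"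
  have I2: "integrable lborel (\<lambda>t. t^2 * W t)" by (rule t2W_int[OF W_meas W_nonneg W_int W_4th])
  have C2_nn: "0 \<le> C2" unfolding C2_def using W_nonneg by (intro integral_nonneg_AE) auto
  have Kb: "\<bar>Kf W a b\<bar> \<le> C2" for a b unfolding C2_def by (rule Kf_bound[OF W_meas W_nonneg I2])

  have int_X0: "integrable M (X 0)"
  proof (rule Bochner_Integration.integrable_bound[where f="\<lambda>\<omega>. 2 + (norm (X 0 \<omega>))^4"])
    show "integrable M (\<lambda>\<omega>. 2 + (norm (X 0 \<omega>))^4)" using X_4th by auto
    show "AE x in M. norm (X 0 x) \<le> norm (2 + (norm (X 0 x))^4)"
      using aux_le4[of "norm (X 0 _)"] by (intro AE_I2) auto
  qed auto
  define s2 where "s2 = (\<integral>\<omega>. (norm (X 0 \<omega> - m))^2 \<partial>M)"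
  have s2_nn: "0 \<le> s2" unfolding s2_def by (intro integral_nonneg_AE) auto
  have int_sq0: "integrable M (\<lambda>\<omega>. (norm (X 0 \<omega> - m))^2)"
  proof (rule Bochner_Integration.integrable_bound[where f="\<lambda>\<omega>. 2 + 2 * (norm (X 0 \<omega>))^4 + 2 * (norm m)^2"])
    show "integrable M (\<lambda>\<omega>. 2 + 2 * (norm (X 0 \<omega>))^4 + 2 * (norm m)^2)" using X_4th by auto
    show "AE x in M. norm ((norm (X 0 x - m))^2) \<le> norm (2 + 2 * (norm (X 0 x))^4 + 2 * (norm m)^2)"
      using aux_diff_sq[of "X 0 _" m] by (intro AE_I2) auto
  qed auto

  have fst_meas: "(\<lambda>p. fst p) \<in> borel_measurable (borel :: ('h \<times> real) measure)"
    by (intro borel_measurable_continuous_onI continuous_intros)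
  have intX: "integrable M (X i)" and EX: "(\<integral>\<omega>. X i \<omega> \<partial>M) = m" for i
    using ident_transfer[OF Pid P_meas P_meas fst_meas, of i] int_X0 by (simp_all add: P_def m_def)
  have intZ: "integrable M (\<lambda>\<omega>. X i \<omega> - m)" and EZ: "(\<integral>\<omega>. X i \<omega> - m \<partial>M) = 0" for i
    using intX[of i] EX[of i] by (simp_all add: Bochner_Integration.integral_diff prob_space)
  have nsq_meas: "(\<lambda>p. (norm (fst p - m))^2) \<in> borel_measurable (borel :: ('h \<times> real) measure)"
    by (intro borel_measurable_continuous_onI continuous_intros)
  have intN: "integrable M (\<lambda>\<omega>. (norm (X i \<omega> - m))^2)" and EN: "(\<integral>\<omega>. (norm (X i \<omega> - m))^2 \<partial>M) = s2" for i
    using ident_transfer[OF Pid P_meas P_meas nsq_meas, of i] int_sq0 by (simp_all add: P_def s2_def)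

  have Pindep: "indep_vars (\<lambda>_. borel) P UNIV" using XY_indep unfolding P_def .
  have cross: "integrable M (\<lambda>\<omega>. inner (X i \<omega> - m) (X j \<omega> - m)) \<and> (\<integral>\<omega>. inner (X i \<omega> - m) (X j \<omega> - m) \<partial>M) = 0"
    if ij: "i \<noteq> j" for i j
  proof -
    have fm: "(\<lambda>p. fst p - m) \<in> borel_measurable (borel :: ('h \<times> real) measure)"
      by (intro borel_measurable_continuous_onI continuous_intros)
    have r: "indep_var (PiM {i} (\<lambda>_. borel)) (\<lambda>\<omega>. restrict (\<lambda>k. P k \<omega>) {i}) (PiM {j} (\<lambda>_. borel)) (\<lambda>\<omega>. restrict (\<lambda>k. P k \<omega>) {j})"
      by (rule indep_var_restrict[OF Pindep]) (use ij in auto)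
    have mi: "(\<lambda>f. fst (f i) - m) \<in> borel_measurable (PiM {i} (\<lambda>_. (borel :: ('h \<times> real) measure)))"
      by (rule measurable_compose[OF measurable_component_singleton[of _ _ "\<lambda>_. borel"] fm]) simp
    have mj: "(\<lambda>f. fst (f j) - m) \<in> borel_measurable (PiM {j} (\<lambda>_. (borel :: ('h \<times> real) measure)))"
      by (rule measurable_compose[OF measurable_component_singleton[of _ _ "\<lambda>_. borel"] fm]) simp
    have c: "indep_var borel ((\<lambda>f. fst (f i) - m) \<circ> (\<lambda>\<omega>. restrict (\<lambda>k. P k \<omega>) {i})) borel ((\<lambda>f. fst (f j) - m) \<circ> (\<lambda>\<omega>. restrict (\<lambda>k. P k \<omega>) {j}))"
      by (rule indep_var_compose[OF r mi mj])
    have e1: "((\<lambda>f. fst (f i) - m) \<circ> (\<lambda>\<omega>. restrict (\<lambda>k. P k \<omega>) {i})) = (\<lambda>\<omega>. X i \<omega> - m)"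
      by (auto simp: P_def fun_eq_iff)
    have e2: "((\<lambda>f. fst (f j) - m) \<circ> (\<lambda>\<omega>. restrict (\<lambda>k. P k \<omega>) {j})) = (\<lambda>\<omega>. X j \<omega> - m)"
      by (auto simp: P_def fun_eq_iff)
    have c': "indep_var borel (\<lambda>\<omega>. X i \<omega> - m) borel (\<lambda>\<omega>. X j \<omega> - m)" using c unfolding e1 e2 .
    show ?thesis using indep_inner[OF c' intZ intZ] EZ by simp
  qed

  define VA where "VA = vimage_algebra (space M) (\<lambda>\<omega> i. X i \<omega>) (PiM UNIV (\<lambda>_. borel))"
  define VB where "VB = vimage_algebra (space M) (\<lambda>\<omega> i. eps i \<omega>) (PiM UNIV (\<lambda>_. borel))"
  have sA: "sigma_algebra (space M) (sets VA)"
    using sets.sigma_algebra_axioms[of VA] by (simp add: VA_def)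
  have sB: "sigma_algebra (space M) (sets VB)"
    using sets.sigma_algebra_axioms[of VB] by (simp add: VB_def)
  have indAB: "indep_set (sets VA) (sets VB)" using eps_X_indep unfolding VA_def VB_def .
  have Kmeas: "(\<lambda>\<omega>. Kf W (eps i \<omega>) (eps j \<omega>)) \<in> borel_measurable M" for i j
    by (rule Kf_meas[OF W_meas]) auto
  have XK: "indep_var borel (\<lambda>\<omega>. inner (X i \<omega> - m) (X j \<omega> - m)) borel (\<lambda>\<omega>. Kf W (eps i \<omega>) (eps j \<omega>))" for i j
  proof (rule indep_var_from_set[OF indAB sA sB])
    show "(\<lambda>\<omega>. inner (X i \<omega> - m) (X j \<omega> - m)) \<in> borel_measurable M" by measurable
    show "(\<lambda>\<omega>. Kf W (eps i \<omega>) (eps j \<omega>)) \<in> borel_measurable M" by (rule Kmeas)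
    fix S :: "real set" assume S: "S \<in> sets borel"
    show "(\<lambda>\<omega>. inner (X i \<omega> - m) (X j \<omega> - m)) -` S \<inter> space M \<in> sets VA"
      unfolding VA_def
      by (rule vimage_in[where \<phi>="\<lambda>x. inner (x i - m) (x j - m)"]) (auto simp: S)
    show "(\<lambda>\<omega>. Kf W (eps i \<omega>) (eps j \<omega>)) -` S \<inter> space M \<in> sets VB"
      unfolding VB_def
      by (rule vimage_in[where \<phi>="\<lambda>x. Kf W (x i) (x j)"]) (auto simp: S intro!: Kf_meas[OF W_meas])
  qed
  have intK: "integrable M (\<lambda>\<omega>. Kf W (eps i \<omega>) (eps j \<omega>))" for i j
    by (rule integrable_const_bound[where B=C2]) (use Kb Kmeas in auto)
  have EKle: "(\<integral>\<omega>. Kf W (eps i \<omega>) (eps j \<omega>) \<partial>M) \<le> C2" for i j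
  proof -
    have "(\<integral>\<omega>. Kf W (eps i \<omega>) (eps j \<omega>) \<partial>M) \<le> (\<integral>\<omega>. C2 \<partial>M)"
      by (rule integral_mono[OF intK]) (use Kb in \<open>auto simp: abs_le_iff\<close>)
    thus ?thesis by (simp add: prob_space)
  qed
  have intInn: "integrable M (\<lambda>\<omega>. inner (X i \<omega> - m) (X j \<omega> - m))" for i j
  proof (cases "i = j")
    case True then show ?thesis using intN[of i] by (simp add: power2_norm_eq_inner)
  next
    case False then show ?thesis using cross by blast
  qed
  define T where "T i j \<omega> = inner (X i \<omega> - m) (X j \<omega> - m) * Kf W (eps i \<omega>) (eps j \<omega>)" for i j \<omega>
  have intT: "integrable M (T i j)" for i j
    unfolding T_def[abs_def] by (rule indep_var_integrable[OF XK intInn intK])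
  have ET: "(\<integral>\<omega>. T i j \<omega> \<partial>M) = (\<integral>\<omega>. inner (X i \<omega> - m) (X j \<omega> - m) \<partial>M) * (\<integral>\<omega>. Kf W (eps i \<omega>) (eps j \<omega>) \<partial>M)" for i j
    unfolding T_def by (rule indep_var_lebesgue_integral[OF XK intInn intK])
  have ETle: "(\<Sum>j<n. \<integral>\<omega>. T i j \<omega> \<partial>M) \<le> s2 * C2" if i: "i < n" for i n
  proof -
    have "(\<Sum>j<n. \<integral>\<omega>. T i j \<omega> \<partial>M) = (\<Sum>j<n. if j = i then (\<integral>\<omega>. T i i \<omega> \<partial>M) else 0)"
      by (intro sum.cong refl) (auto simp: ET cross)
    also have "\<dots> = (\<integral>\<omega>. T i i \<omega> \<partial>M)" using i by simp
    also have "\<dots> = s2 * (\<integral>\<omega>. Kf W (eps i \<omega>) (eps i \<omega>) \<partial>M)"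
      using EN[of i] by (simp add: ET power2_norm_eq_inner)
    also have "\<dots> \<le> s2 * C2" using EKle s2_nn by (intro mult_left_mono) auto
    finally show ?thesis .
  qed
  define A where "A n \<omega> = (\<Sum>i<n. \<Sum>j<n. inner (X i \<omega> - m) (X j \<omega> - m) * Kf W (eps i \<omega>) (eps j \<omega>)) / real n" for n \<omega>
  have A_T: "A n \<omega> = (\<Sum>i<n. \<Sum>j<n. T i j \<omega>) / real n" for n \<omega> by (simp add: A_def T_def)
  have intA: "integrable M (A n)" for n
    unfolding A_T[abs_def] using intT by (intro integrable_divide Bochner_Integration.integrable_sum) auto
  have A_meas: "A n \<in> borel_measurable M" for n using intA by auto
  have EA: "(\<integral>\<omega>. A n \<omega> \<partial>M) \<le> s2 * C2" if n: "n \<ge> 1" for n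
  proof -
    have "(\<integral>\<omega>. A n \<omega> \<partial>M) = (\<Sum>i<n. \<Sum>j<n. \<integral>\<omega>. T i j \<omega> \<partial>M) / real n"
      unfolding A_T using intT
      by (simp add: Bochner_Integration.integral_sum Bochner_Integration.integrable_sum)
    also have "\<dots> \<le> (\<Sum>i<n. s2 * C2) / real n"
      using ETle by (intro divide_right_mono sum_mono) auto
    also have "\<dots> = s2 * C2" using n by simp
    finally show ?thesis .
  qed

  have bh_meas: "betahat n \<in> borel_measurable M" for n
  proof -
    obtain g where g: "g \<in> borel_measurable (PiM {..<n} (\<lambda>_. borel))"
      and eq: "\<forall>\<omega>\<in>space M. betahat n \<omega> = g (\<lambda>i\<in>{..<n}. (X i \<omega>, Y i \<omega>))"
      using betahat_sample[of n] by blast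
    have "(\<lambda>\<omega>. (\<lambda>i\<in>{..<n}. (X i \<omega>, Y i \<omega>))) \<in> measurable M (PiM {..<n} (\<lambda>_. borel))"
      using P_meas unfolding P_def by measurable
    hence "(\<lambda>\<omega>. g (\<lambda>i\<in>{..<n}. (X i \<omega>, Y i \<omega>))) \<in> borel_measurable M"
      using g by (rule measurable_compose)
    thus ?thesis by (subst measurable_cong[where g="\<lambda>\<omega>. g (\<lambda>i\<in>{..<n}. (X i \<omega>, Y i \<omega>))"]) (auto simp: eq)
  qed

  define Q where "Q = (\<lambda>n \<omega>. real n *
            (\<integral>t. ((t / real n) * (\<Sum>j<n. cos (t * eps j \<omega>) *
                     inner (X j \<omega> - m) (betahat n \<omega> - beta)))\<^sup>2 * W t \<partial>lborel))"
  have QA: "Q n \<omega> \<le> (norm (betahat n \<omega> - beta))\<^sup>2 * A n \<omega>" and A_nn: "0 \<le> A n \<omega>"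
    if "n \<ge> 1" for n \<omega>
    using pointwise(1)[where z="\<lambda>j. X j \<omega> - m" and e="\<lambda>j. eps j \<omega>" and d="betahat n \<omega> - beta", OF that W_meas W_nonneg I2]
      pointwise(2)[where z="\<lambda>j. X j \<omega> - m" and e="\<lambda>j. eps j \<omega>", OF that W_meas W_nonneg I2]
    by (auto simp: Q_def A_def)
  have Q_nn: "0 \<le> Q n \<omega>" for n \<omega>
    unfolding Q_def using W_nonneg by (intro mult_nonneg_nonneg integral_nonneg_AE) auto

  have "o_P M Q (\<lambda>_. 1)"
    unfolding o_P_def
  proof (intro allI impI LIMSEQ_I)
    fix e r :: real assume e: "0 < e" and r: "0 < r"
    define C where "C = s2 * C2"
    have C_nn: "0 \<le> C" unfolding C_def using s2_nn C2_nn by simp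
    define \<delta> where "\<delta> = r * e / (2 * (C + 1))"
    have \<delta>pos: "0 < \<delta>" unfolding \<delta>_def using r e C_nn by simp
    have \<delta>C: "C / (e / \<delta>) < r / 2"
    proof -
      have "C / (e / \<delta>) = r * C / (2 * (C + 1))" unfolding \<delta>_def using e C_nn by (simp add: divide_simps)
      also have "\<dots> < r / 2" using r C_nn by (simp add: field_simps)
      finally show ?thesis .
    qed
    have "(\<lambda>n. measure M {\<omega> \<in> space M. \<bar>norm (betahat n \<omega> - beta)\<bar> > sqrt \<delta> * real n powr (-1/4)}) \<longlonglongrightarrow> 0"
      using betahat_rate \<delta>pos unfolding o_P_def by simp
    from LIMSEQ_D[OF this, of "r/2"] r obtain N1 where
      N1: "\<And>n. n \<ge> N1 \<Longrightarrow> norm (measure M {\<omega> \<in> space M. \<bar>norm (betahat n \<omega> - beta)\<bar> > sqrt \<delta> * real n powr (-1/4)} - 0) < r / 2"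
      by auto
    show "\<exists>no. \<forall>n\<ge>no. norm (measure M {\<omega> \<in> space M. \<bar>Q n \<omega>\<bar> > e * 1} - 0) < r"
    proof (intro exI allI impI)
      fix n assume nN: "max N1 1 \<le> n"
      hence n1: "n \<ge> 1" and nN1: "n \<ge> N1" by auto
      define S where "S = {\<omega> \<in> space M. \<bar>Q n \<omega>\<bar> > e * 1}"
      define S1 where "S1 = {\<omega> \<in> space M. \<bar>norm (betahat n \<omega> - beta)\<bar> > sqrt \<delta> * real n powr (-1/4)}"
      define S2 where "S2 = {\<omega> \<in> space M. A n \<omega> \<ge> e / \<delta>}"
      have S1_sets: "S1 \<in> sets M" unfolding S1_def using bh_meas[of n] by measurable
      have S2_sets: "S2 \<in> sets M" unfolding S2_def using A_meas[of n] by measurable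
      have pw: "real n powr (-1/4) \<le> 1"
      proof -
        have "1 \<le> real n powr (1/4)" using n1 by (intro ge_one_powr_ge_zero) auto
        thus ?thesis by (simp add: powr_minus_divide divide_le_eq)
      qed
      have sub: "S \<subseteq> S1 \<union> S2"
      proof
        fix \<omega> assume w: "\<omega> \<in> S"
        show "\<omega> \<in> S1 \<union> S2"
        proof (rule ccontr)
          assume "\<omega> \<notin> S1 \<union> S2"
          with w have ws: "\<omega> \<in> space M" and d1: "norm (betahat n \<omega> - beta) \<le> sqrt \<delta> * real n powr (-1/4)"
            and d2: "A n \<omega> < e / \<delta>" and q: "\<bar>Q n \<omega>\<bar> > e"
            by (auto simp: S_def S1_def S2_def)
          have "norm (betahat n \<omega> - beta) \<le> sqrt \<delta>"
            using d1 pw \<delta>pos by (smt (verit) mult_left_le real_sqrt_ge_zero)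
          hence "(norm (betahat n \<omega> - beta))\<^sup>2 \<le> (sqrt \<delta>)\<^sup>2" by (intro power_mono) auto
          hence D: "(norm (betahat n \<omega> - beta))\<^sup>2 \<le> \<delta>" using \<delta>pos by simp
          have "Q n \<omega> \<le> (norm (betahat n \<omega> - beta))\<^sup>2 * A n \<omega>" by (rule QA[OF n1])
          also have "\<dots> \<le> \<delta> * A n \<omega>" using D A_nn[OF n1] by (intro mult_right_mono) auto
          also have "\<dots> < \<delta> * (e / \<delta>)" using d2 \<delta>pos by (intro mult_strict_left_mono) auto
          also have "\<dots> = e" using \<delta>pos by simp
          finally show False using q Q_nn[of n \<omega>] by simp
        qed
      qed
      have mS: "measure M S \<le> measure M S1 + measure M S2"
      proof (cases "S \<in> sets M")
        case True
        have "measure M S \<le> measure M (S1 \<union> S2)" using True S1_sets S2_sets sub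
          by (intro finite_measure_mono) auto
        also have "\<dots> \<le> measure M S1 + measure M S2" using S1_sets S2_sets by (rule measure_Un_le)
        finally show ?thesis .
      next
        case False then show ?thesis by (simp add: measure_notin_sets)
      qed
      have m2: "measure M S2 \<le> (\<integral>\<omega>. A n \<omega> \<partial>M) / (e / \<delta>)"
        unfolding S2_def
        by (rule integral_Markov_inequality_measure[OF intA[of n], where A="space M"])
           (use A_nn[OF n1] e \<delta>pos in auto)
      also have "\<dots> \<le> C / (e / \<delta>)" using EA[OF n1] e \<delta>pos unfolding C_def by (intro divide_right_mono) auto
      also have "\<dots> < r / 2" by (rule \<delta>C)
      finally have m2': "measure M S2 < r / 2" .
      have m1: "measure M S1 < r / 2" using N1[OF nN1] unfolding S1_def by simp
      show "norm (measure M {\<omega> \<in> space M. \<bar>Q n \<omega>\<bar> > e * 1} - 0) < r"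
        using mS m1 m2' unfolding S_def by simp
    qed
  qed
  then show ?thesis unfolding Q_def m_def .
qed

end
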